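(* Let $m,d,n\ge1$, $p,q,\lambda>0$, $g(\alpha)=\|\alpha/\lambda\|_p^q$, and let $X=[x_1,\dots,x_n]\in\mathbb{R}^{m\times n}$ be fixed. For $D\in\mathbb{R}^{m\times d}$ define $$L_X(D)=\inf_{\epsilon>0}\sup_{A\in\mathfrak{A}_\epsilon(X,D)}\tfrac1n\|(X-DA)A^\top\|_\star,\qquad C_X(D)=\inf_{\epsilon>0}\sup_{A\in\mathfrak{A}_\epsilon(X,D)}\tfrac{1}{2n}\sum_{i=1}^n\|\alpha_i\|_1^2 .$$ Then there exist finite constants $L_X$ and $C_X$, not depending on $D$, such that $L_X(D)\le L_X$ and $C_X(D)\le C_X$ for every $D\in\mathbb{R}^{m\times d}$.
   Context: For $x\in\mathbb{R}^m$, $f_x(D)=\inf_{\alpha\in\mathbb{R}^d}\tfrac12\|x-D\alpha\|_2^2+g(\alpha)$. For $\epsilon>0$, $\mathfrak{A}_\epsilon(X,D)$ is the set of matrices $A=[\alpha_1,\dots,\alpha_n]\in\mathbb{R}^{d\times n}$ with $\tfrac12\|x_i-D\alpha_i\|_2^2+g(\alpha_i)\le f_{x_i}(D)+\epsilon$ for all $i$. For a matrix $M$ with columns $m_i$, $\|M\|=\|M\|_{1\to2}=\max_i\|m_i\|_2$, and $\|M\|_\star=\sup_{\|U\|_{1\to2}\le1}\langle M,U\rangle_F$ is its dual norm with respect to the Frobenius inner product. For $0<p<1$, $\|\cdot\|_p$ is the $\ell_p$ quasi-norm. *)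

theory Defs
  imports "HOL-Analysis.Analysis"
begin

text \<open>Vectors in R^k are modelled as real^'k, matrices in R^(r x c) as real^'c^'r
  (rows indexed by 'r). Columns are obtained via column.\<close>

definition lp_norm :: "real \<Rightarrow> real^'d \<Rightarrow> real" where
  "lp_norm p v = (\<Sum>j\<in>UNIV. \<bar>v $ j\<bar> powr p) powr (1 / p)"

definition l1_norm :: "real^'d \<Rightarrow> real" where
  "l1_norm v = (\<Sum>j\<in>UNIV. \<bar>v $ j\<bar>)"

definition penalty :: "real \<Rightarrow> real \<Rightarrow> real \<Rightarrow> real^'d \<Rightarrow> real" where
  "penalty p q lam \<alpha> = (lp_norm p ((1 / lam) *\<^sub>R \<alpha>)) powr q"

definition fval :: "(real^'d \<Rightarrow> real) \<Rightarrow> real^'m \<Rightarrow> real^'d^'m \<Rightarrow> real" where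
  "fval g x D = Inf ((\<lambda>\<alpha>. (1/2) * (norm (x - D *v \<alpha>))\<^sup>2 + g \<alpha>) ` UNIV)"

definition approx_set :: "(real^'d \<Rightarrow> real) \<Rightarrow> real \<Rightarrow> real^'n^'m \<Rightarrow> real^'d^'m \<Rightarrow> (real^'n^'d) set" where
  "approx_set g \<epsilon> X D = {A. \<forall>i. (1/2) * (norm (column i X - D *v column i A))\<^sup>2 + g (column i A)
        \<le> fval g (column i X) D + \<epsilon>}"

definition norm12 :: "real^'c^'r \<Rightarrow> real" where
  "norm12 M = Max (range (\<lambda>j. norm (column j M)))"

definition frob_inner :: "real^'c^'r \<Rightarrow> real^'c^'r \<Rightarrow> real" where
  "frob_inner M U = (\<Sum>i\<in>UNIV. \<Sum>j\<in>UNIV. M $ i $ j * U $ i $ j)"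

definition dual_norm12 :: "real^'c^'r \<Rightarrow> real" where
  "dual_norm12 M = Sup (frob_inner M ` {U. norm12 U \<le> 1})"

definition LX :: "(real^'d \<Rightarrow> real) \<Rightarrow> real^'n^'m \<Rightarrow> real^'d^'m \<Rightarrow> ereal" where
  "LX g X D = (INF \<epsilon>\<in>{0<..}. SUP A\<in>approx_set g \<epsilon> X D.
      ereal (dual_norm12 ((X - D ** A) ** transpose A) / real CARD('n)))"

definition CX :: "(real^'d \<Rightarrow> real) \<Rightarrow> real^'n^'m \<Rightarrow> real^'d^'m \<Rightarrow> ereal" where
  "CX g X D = (INF \<epsilon>\<in>{0<..}. SUP A\<in>approx_set g \<epsilon> X D.
      ereal (1 / (2 * real CARD('n)) * (\<Sum>i\<in>UNIV. (l1_norm (column i A))\<^sup>2)))"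

end

theory Submission
  imports Defs
begin

lemma penalty_zero: "penalty p q lam 0 = 0"
  by (simp add: penalty_def lp_norm_def)

lemma penalty_nonneg: "penalty p q lam a \<ge> 0"
  by (simp add: penalty_def)

lemma fval_le:
  assumes "\<And>a. g a \<ge> 0" "g 0 = 0"
  shows "fval g x D \<le> (1/2) * (norm x)\<^sup>2"
proof -
  have bdd: "bdd_below ((\<lambda>\<alpha>. (1/2) * (norm (x - D *v \<alpha>))\<^sup>2 + g \<alpha>) ` UNIV)"
    by (rule bdd_belowI[where m=0]) (auto intro: add_nonneg_nonneg assms)
  have "fval g x D \<le> (\<lambda>\<alpha>. (1/2) * (norm (x - D *v \<alpha>))\<^sup>2 + g \<alpha>) 0"
    unfolding fval_def by (rule cInf_lower[OF rangeI bdd])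
  then show ?thesis using assms by simp
qed

lemma coord_bound:
  fixes a :: "real^'d"
  assumes p: "p > 0" and q: "q > 0" and lam: "lam > 0" and R: "penalty p q lam a \<le> R"
  shows "\<bar>a $ j\<bar> \<le> lam * R powr (1/q)"
proof -
  define v where "v = (1/lam) *\<^sub>R a"
  have "\<bar>v $ j\<bar> = (\<bar>v $ j\<bar> powr p) powr (1/p)"
    using p by (simp add: powr_powr)
  also have "\<dots> \<le> (\<Sum>k\<in>UNIV. \<bar>v $ k\<bar> powr p) powr (1/p)"
    using p by (intro powr_mono2) (auto intro: member_le_sum)
  finally have h1: "\<bar>v $ j\<bar> \<le> lp_norm p v" by (simp add: lp_norm_def)
  have "\<bar>v $ j\<bar> powr q \<le> lp_norm p v powr q"
    using q h1 by (intro powr_mono2) auto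
  also have "\<dots> \<le> R" using R by (simp add: penalty_def v_def)
  finally have h2: "\<bar>v $ j\<bar> powr q \<le> R" .
  have "\<bar>v $ j\<bar> = (\<bar>v $ j\<bar> powr q) powr (1/q)"
    using q by (simp add: powr_powr)
  also have "\<dots> \<le> R powr (1/q)"
    using q h2 by (intro powr_mono2) auto
  finally have "\<bar>v $ j\<bar> \<le> R powr (1/q)" .
  moreover have "\<bar>a $ j\<bar> = lam * \<bar>v $ j\<bar>" using lam by (simp add: v_def abs_mult)
  ultimately show ?thesis using lam by simp
qed

lemma U_entry:
  fixes U :: "real^'c^'r"
  assumes "norm12 U \<le> 1"
  shows "\<bar>U $ k $ j\<bar> \<le> 1"
proof -
  have "\<bar>U $ k $ j\<bar> = \<bar>column j U $ k\<bar>" by (simp add: column_def)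
  also have "\<dots> \<le> norm (column j U)" by (rule component_le_norm_cart)
  also have "\<dots> \<le> norm12 U" unfolding norm12_def by (rule Max_ge) auto
  finally show ?thesis using assms by simp
qed

lemma dual_bound:
  fixes M :: "real^'c^'r"
  assumes "\<And>k j. \<bar>M $ k $ j\<bar> \<le> B"
  shows "dual_norm12 M \<le> real CARD('r) * real CARD('c) * B"
  unfolding dual_norm12_def
proof (rule cSup_least)
  have z: "((\<chi> i. 0) :: real^'r) = 0" by (simp add: vec_eq_iff)
  have "norm12 (0::real^'c^'r) \<le> 1" unfolding norm12_def by (simp add: column_def z)
  then show "frob_inner M ` {U. norm12 U \<le> 1} \<noteq> {}" by auto
next
  fix y assume "y \<in> frob_inner M ` {U. norm12 U \<le> 1}"
  then obtain U where U: "norm12 U \<le> 1" and y: "y = frob_inner M U" by auto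
  have "y \<le> (\<Sum>i\<in>(UNIV::'r set). \<Sum>j\<in>(UNIV::'c set). B)"
    unfolding y frob_inner_def
  proof (intro sum_mono)
    fix i j
    have "M $ i $ j * U $ i $ j \<le> \<bar>M $ i $ j\<bar> * \<bar>U $ i $ j\<bar>"
      by (simp add: abs_mult[symmetric])
    also have "\<dots> \<le> B * 1"
      by (intro mult_mono assms U_entry[OF U]) (auto intro: order_trans[OF abs_ge_zero assms])
    finally show "M $ i $ j * U $ i $ j \<le> B" by simp
  qed
  then show "y \<le> real CARD('r) * real CARD('c) * B" by simp
qed

theorem proposition2:
  fixes p q lam :: real and X :: "real^'n^'m"
  assumes "p > 0" and "q > 0" and "lam > 0"
  shows "\<exists>Lc Cc :: real. \<forall>D :: real^'d^'m.
           LX (penalty p q lam) X D \<le> ereal Lc \<and> CX (penalty p q lam) X D \<le> ereal Cc"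
proof -
  define g :: "real^'d \<Rightarrow> real" where "g = penalty p q lam"
  define R where "R = (1/2) * (\<Sum>i\<in>UNIV. (norm (column i X))\<^sup>2) + 1"
  define Ab where "Ab = lam * R powr (1/q)"
  define Eb where "Eb = sqrt (2 * R)"
  have R_i: "(1/2) * (norm (column i X))\<^sup>2 + 1 \<le> R" for i
  proof -
    have "(norm (column i X))\<^sup>2 \<le> (\<Sum>i\<in>UNIV. (norm (column i X))\<^sup>2)"
      by (rule member_le_sum) auto
    then show ?thesis unfolding R_def by simp
  qed
  have key: "\<bar>A $ j $ i\<bar> \<le> Ab \<and> \<bar>(X - D ** A) $ k $ i\<bar> \<le> Eb"
    if A: "A \<in> approx_set g 1 X D" for A :: "real^'n^'d" and D :: "real^'d^'m" and i j k
  proof -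
    have h: "(1/2) * (norm (column i X - D *v column i A))\<^sup>2 + g (column i A)
        \<le> fval g (column i X) D + 1" using A unfolding approx_set_def by auto
    have f: "fval g (column i X) D \<le> (1/2) * (norm (column i X))\<^sup>2"
      by (rule fval_le) (auto simp: g_def penalty_zero penalty_nonneg)
    have gn: "g (column i A) \<ge> 0" by (simp add: g_def penalty_nonneg)
    have nn: "0 \<le> (1/2) * (norm (column i X - D *v column i A))\<^sup>2" by simp
    have "g (column i A) \<le> R" using h f R_i[of i] nn by linarith
    then have "\<bar>column i A $ j\<bar> \<le> Ab" unfolding Ab_def g_def
      using assms by (intro coord_bound) auto
    then have 1: "\<bar>A $ j $ i\<bar> \<le> Ab" by (simp add: column_def)
    have "(norm (column i X - D *v column i A))\<^sup>2 \<le> 2 * R" using h f R_i[of i] gn by linarith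
    then have n: "norm (column i X - D *v column i A) \<le> Eb"
      unfolding Eb_def by (simp add: real_le_rsqrt)
    have "column i X - D *v column i A = column i (X - D ** A)"
      by (simp add: column_def matrix_vector_mult_def matrix_matrix_mult_def vec_eq_iff)
    then have "\<bar>(X - D ** A) $ k $ i\<bar> = \<bar>(column i X - D *v column i A) $ k\<bar>"
      by (simp add: column_def)
    also have "\<dots> \<le> Eb" using n component_le_norm_cart order_trans by blast
    finally show ?thesis using 1 by simp
  qed
  have Ab0: "Ab \<ge> 0" unfolding Ab_def using assms by simp
  have Eb0: "Eb \<ge> 0" unfolding Eb_def R_def by (simp add: sum_nonneg)
  define Lc where "Lc = real CARD('m) * real CARD('d) * (real CARD('n) * (Eb * Ab)) / real CARD('n)"
  define Cc where "Cc = 1 / (2 * real CARD('n)) * (\<Sum>i\<in>(UNIV::'n set). (real CARD('d) * Ab)\<^sup>2)"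
  have "LX g X D \<le> ereal Lc \<and> CX g X D \<le> ereal Cc" for D :: "real^'d^'m"
  proof
    have "LX g X D \<le> (SUP A\<in>approx_set g 1 X D.
      ereal (dual_norm12 ((X - D ** A) ** transpose A) / real CARD('n)))"
      unfolding LX_def by (rule INF_lower) auto
    also have "\<dots> \<le> ereal Lc"
    proof (rule SUP_least)
      fix A assume A: "A \<in> approx_set g 1 X D"
      have "\<bar>((X - D ** A) ** transpose A) $ k $ j\<bar> \<le> real CARD('n) * (Eb * Ab)" for k j
      proof -
        have "\<bar>((X - D ** A) ** transpose A) $ k $ j\<bar>
            = \<bar>\<Sum>i\<in>UNIV. (X - D ** A) $ k $ i * A $ j $ i\<bar>"
          by (simp add: matrix_matrix_mult_def transpose_def)
        also have "\<dots> \<le> (\<Sum>i\<in>(UNIV::'n set). \<bar>(X - D ** A) $ k $ i * A $ j $ i\<bar>)"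
          by (rule sum_abs)
        also have "\<dots> \<le> (\<Sum>i\<in>(UNIV::'n set). Eb * Ab)"
          using key[OF A] by (intro sum_mono) (simp add: abs_mult mult_mono Ab0 Eb0)
        finally show ?thesis by simp
      qed
      then have "dual_norm12 ((X - D ** A) ** transpose A) \<le> real CARD('m) * real CARD('d) * (real CARD('n) * (Eb * Ab))"
        by (rule dual_bound)
      then show "ereal (dual_norm12 ((X - D ** A) ** transpose A) / real CARD('n)) \<le> ereal Lc"
        unfolding Lc_def ereal_less_eq by (rule divide_right_mono) simp_all
    qed
    finally show "LX g X D \<le> ereal Lc" .
  next
    have "CX g X D \<le> (SUP A\<in>approx_set g 1 X D.
      ereal (1 / (2 * real CARD('n)) * (\<Sum>i\<in>UNIV. (l1_norm (column i A))\<^sup>2)))"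
      unfolding CX_def by (rule INF_lower) auto
    also have "\<dots> \<le> ereal Cc"
    proof (rule SUP_least)
      fix A assume A: "A \<in> approx_set g 1 X D"
      have "(l1_norm (column i A))\<^sup>2 \<le> (real CARD('d) * Ab)\<^sup>2" for i
      proof -
        have "l1_norm (column i A) \<le> (\<Sum>j\<in>(UNIV::'d set). Ab)"
          unfolding l1_norm_def using key[OF A] by (intro sum_mono) (simp add: column_def)
        moreover have "0 \<le> l1_norm (column i A)" unfolding l1_norm_def by (simp add: sum_nonneg)
        ultimately show ?thesis by (simp add: power_mono)
      qed
      then have "(\<Sum>i\<in>UNIV. (l1_norm (column i A))\<^sup>2) \<le> (\<Sum>i\<in>(UNIV::'n set). (real CARD('d) * Ab)\<^sup>2)"
        by (intro sum_mono)
      then show "ereal (1 / (2 * real CARD('n)) * (\<Sum>i\<in>UNIV. (l1_norm (column i A))\<^sup>2)) \<le> ereal Cc"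
        unfolding Cc_def ereal_less_eq by (rule mult_left_mono) simp_all
    qed
    finally show "CX g X D \<le> ereal Cc" .
  qed
  then show ?thesis unfolding g_def by blast
qed

end
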